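(* Under the three-receiver coding module below, in every slot the transmitted linear combination is innovative (i.e., not already known, so it increases the receiver's rank if received) to every receiver that has not decoded everything that the sender knows.
   Context: A sender broadcasts packets $\mathbf{p}_1,\mathbf{p}_2,\dots$ (indexed by arrival order, vectors over $\mathbb{F}_3$) to three receivers $1,2,3$ over a slotted erasure broadcast channel; each slot it transmits at most one linear combination of arrived packets, each receiver either receives it or suffers an erasure, and perfect feedback gives the sender every receiver's knowledge. The rank of a receiver is the dimension of the space of linear combinations it knows. Receiver $i$ has heard of a packet if it knows some linear combination involving that packet (with nonzero coefficient); $H_i$ is the set of packets it has heard of and $D_i$ the set it has decoded. "Oldest" means smallest index. Coding module: labels $L,N,D$ form a permutation of $\{1,2,3\}$; initially $L=1,N=2,D=3,m=0$. Each slot: let $U=\{\mathbf{p}_1,\dots,\mathbf{p}_m\}$ together with $\mathbf{p}_{m+1}$ if it has arrived, and set $S_1=D_N\cap D_D$, $S_2=D_N\cap(H_D\setminus D_D)$, $S_3=D_N\setminus H_D$, $S_4=D_D\setminus D_N$, $S_5=(H_D\setminus D_D)\setminus D_N$, $S_6=U\setminus(H_D\cup D_N)$. Transmit: Case 1 ($\mathbf{p}_{m+1}$ not arrived): if $S_2,S_4$ both nonempty send the sum of their oldest packets; else if $S_3,S_4$ both nonempty send the sum of their oldest packets; else send the oldest packet of the first nonempty set among $S_5,S_6,S_2,S_3,S_4$; if all are empty send nothing. Case 2 ($\mathbf{p}_{m+1}\in S_1$): send $\mathbf{p}_{m+1}$ plus whatever Case 1 would send. Case 3 ($\mathbf{p}_{m+1}\in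 S_2$): send $\mathbf{p}_{m+1}+c\mathbf{p}$ with $\mathbf{p}$ the oldest packet of the first nonempty set among $S_4,S_5,S_6$, where $c=1$ unless $\mathbf{p}\in S_5$, in which case $c\in\{1,2\}$ is chosen so that the combination is innovative to receiver $D$. Case 4 ($\mathbf{p}_{m+1}\in S_3$): send $\mathbf{p}_{m+1}+\mathbf{p}$, $\mathbf{p}$ the oldest packet of the first nonempty set among $S_4,S_5,S_6$. Case 5 ($\mathbf{p}_{m+1}\in S_4$): send $\mathbf{p}_{m+1}+\mathbf{p}$, $\mathbf{p}$ the oldest packet of the first nonempty set among $S_2,S_3,S_6$. (In Cases 3–5, if all listed sets are empty, $\mathbf{p}_{m+1}$ is sent alone.) Case 6 (otherwise): send $\mathbf{p}_{m+1}$. After feedback, update $H_i,D_i$, set $m$ to the maximum rank of the three receivers; among receivers that have decoded all of $\mathbf{p}_1,\dots,\mathbf{p}_m$, label the one with lowest index $L$ (if there is none, assign labels arbitrarily); of the other two receivers, if exactly one has nonempty unsolved set $H_i\setminus D_i$, label it $D$ and the other $N$; otherwise assign $D,N$ arbitrarily. *)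

theory Defs
  imports Complex_Main "HOL-Library.Function_Algebras"
begin

text \<open>Packets are identified with their indices 1, 2, 3, ... (arrival order).
A linear combination of packets is represented by its coefficient vector
(a function from packet indices to the field); coordinate 0 is unused.
Receivers are the natural numbers 1, 2, 3.\<close>

type_synonym 'f cvec = "nat \<Rightarrow> 'f"

definition cscale :: "'f::field \<Rightarrow> 'f cvec \<Rightarrow> 'f cvec" where
  "cscale c v = (\<lambda>j. c * v j)"

abbreviation kspan :: "'f::field cvec set \<Rightarrow> 'f cvec set" where
  "kspan \<equiv> Modules.module.span cscale"

definition rank :: "'f::field cvec set \<Rightarrow> nat" where
  "rank V = Vector_Spaces.vector_space.dim cscale V"

definition pkt :: "nat \<Rightarrow> 'f::field cvec" where
  "pkt j = (\<lambda>k. if k = j then 1 else 0)"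

definition decoded :: "'f::field cvec set \<Rightarrow> nat set" where
  "decoded V = {j. 0 < j \<and> pkt j \<in> V}"

definition heard :: "'f::field cvec set \<Rightarrow> nat set" where
  "heard V = {j. 0 < j \<and> (\<exists>v\<in>V. v j \<noteq> 0)}"

definition oldest :: "nat set \<Rightarrow> nat" where
  "oldest S = (LEAST j. j \<in> S)"

definition first_nonempty :: "nat set list \<Rightarrow> nat option" where
  "first_nonempty Ss = (case filter (\<lambda>S. S \<noteq> {}) Ss of [] \<Rightarrow> None | S # _ \<Rightarrow> Some (oldest S))"

definition setU :: "nat \<Rightarrow> nat \<Rightarrow> nat set" where
  "setU m a = {1..m} \<union> (if m + 1 \<le> a then {m + 1} else {})"

definition S1 :: "(nat \<Rightarrow> 'f::field cvec set) \<Rightarrow> nat \<Rightarrow> nat \<Rightarrow> nat set" where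
  "S1 K N D = decoded (K N) \<inter> decoded (K D)"
definition S2 :: "(nat \<Rightarrow> 'f::field cvec set) \<Rightarrow> nat \<Rightarrow> nat \<Rightarrow> nat set" where
  "S2 K N D = decoded (K N) \<inter> (heard (K D) - decoded (K D))"
definition S3 :: "(nat \<Rightarrow> 'f::field cvec set) \<Rightarrow> nat \<Rightarrow> nat \<Rightarrow> nat set" where
  "S3 K N D = decoded (K N) - heard (K D)"
definition S4 :: "(nat \<Rightarrow> 'f::field cvec set) \<Rightarrow> nat \<Rightarrow> nat \<Rightarrow> nat set" where
  "S4 K N D = decoded (K D) - decoded (K N)"
definition S5 :: "(nat \<Rightarrow> 'f::field cvec set) \<Rightarrow> nat \<Rightarrow> nat \<Rightarrow> nat set" where
  "S5 K N D = (heard (K D) - decoded (K D)) - decoded (K N)"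
definition S6 :: "(nat \<Rightarrow> 'f::field cvec set) \<Rightarrow> nat \<Rightarrow> nat \<Rightarrow> nat \<Rightarrow> nat \<Rightarrow> nat set" where
  "S6 K N D m a = setU m a - (heard (K D) \<union> decoded (K N))"

text \<open>Case 1 transmission (None = send nothing).\<close>
definition case1_send :: "(nat \<Rightarrow> 'f::field cvec set) \<Rightarrow> nat \<Rightarrow> nat \<Rightarrow> nat \<Rightarrow> nat \<Rightarrow> 'f cvec option" where
  "case1_send K N D m a =
     (if S2 K N D \<noteq> {} \<and> S4 K N D \<noteq> {} then Some (pkt (oldest (S2 K N D)) + pkt (oldest (S4 K N D)))
      else if S3 K N D \<noteq> {} \<and> S4 K N D \<noteq> {} then Some (pkt (oldest (S3 K N D)) + pkt (oldest (S4 K N D)))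
      else map_option pkt (first_nonempty [S5 K N D, S6 K N D m a, S2 K N D, S3 K N D, S4 K N D]))"

text \<open>Transmission of the coding module; c is the coefficient used in Case 3
  when the partner packet lies in S_5 (ignored otherwise).\<close>
definition send :: "(nat \<Rightarrow> 'f::field cvec set) \<Rightarrow> nat \<Rightarrow> nat \<Rightarrow> nat \<Rightarrow> nat \<Rightarrow> 'f \<Rightarrow> 'f cvec option" where
  "send K N D m a c =
     (if \<not> (m + 1 \<le> a) then case1_send K N D m a
      else if m + 1 \<in> S1 K N D then
        Some (case case1_send K N D m a of None \<Rightarrow> pkt (m + 1) | Some w \<Rightarrow> pkt (m + 1) + w)
      else if m + 1 \<in> S2 K N D then
        (case first_nonempty [S4 K N D, S5 K N D, S6 K N D m a] of
           None \<Rightarrow> Some (pkt (m + 1))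
         | Some p \<Rightarrow> Some (pkt (m + 1) + cscale (if p \<in> S5 K N D then c else 1) (pkt p)))
      else if m + 1 \<in> S3 K N D then
        (case first_nonempty [S4 K N D, S5 K N D, S6 K N D m a] of
           None \<Rightarrow> Some (pkt (m + 1))
         | Some p \<Rightarrow> Some (pkt (m + 1) + pkt p))
      else if m + 1 \<in> S4 K N D then
        (case first_nonempty [S2 K N D, S3 K N D, S6 K N D m a] of
           None \<Rightarrow> Some (pkt (m + 1))
         | Some p \<Rightarrow> Some (pkt (m + 1) + pkt p))
      else Some (pkt (m + 1)))"

definition innovative :: "'f::field cvec option \<Rightarrow> 'f cvec set \<Rightarrow> bool" where
  "innovative xo V \<longleftrightarrow> (\<exists>v. xo = Some v \<and> v \<notin> V)"

definition labels_ok :: "(nat \<Rightarrow> 'f::field cvec set) \<Rightarrow> nat \<Rightarrow> nat \<times> nat \<times> nat \<Rightarrow> bool" where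
  "labels_ok K m lab =
     (case lab of (L, N, D) \<Rightarrow>
        {L, N, D} = {1, 2, 3} \<and>
        (let C = {i \<in> {1, 2, 3}. {1..m} \<subseteq> decoded (K i)} in C \<noteq> {} \<longrightarrow> L = Min C) \<and>
        (let uns = (\<lambda>i. heard (K i) - decoded (K i) \<noteq> {}) in uns N \<noteq> uns D \<longrightarrow> uns D))"

text \<open>A run of the coding module: arr t = number of packets arrived by slot t,
  rcv t i = receiver i receives the slot-t transmission, K t i = space known by
  receiver i at the start of slot t, lab t = labels (L,N,D) in slot t,
  m t = value of m in slot t, x t = transmission in slot t.\<close>
definition coding_run ::
  "(nat \<Rightarrow> nat) \<Rightarrow> (nat \<Rightarrow> nat \<Rightarrow> bool) \<Rightarrow> (nat \<Rightarrow> nat \<Rightarrow> 'f::field cvec set) \<Rightarrow>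
   (nat \<Rightarrow> nat \<times> nat \<times> nat) \<Rightarrow> (nat \<Rightarrow> nat) \<Rightarrow> (nat \<Rightarrow> 'f cvec option) \<Rightarrow> bool" where
  "coding_run arr rcv K lab m x \<longleftrightarrow>
     mono arr \<and>
     (\<forall>i. K 0 i = kspan {}) \<and> lab 0 = (1, 2, 3) \<and> m 0 = 0 \<and>
     (\<forall>t. case lab t of (L, N, D) \<Rightarrow>
        (\<exists>c\<in>{1, 2}.
           ((\<exists>c'\<in>{1, 2}. innovative (send (K t) N D (m t) (arr t) c') (K t D))
              \<longrightarrow> innovative (send (K t) N D (m t) (arr t) c) (K t D)) \<and>
           x t = send (K t) N D (m t) (arr t) c)) \<and>
     (\<forall>t i. K (Suc t) i =
        (case x t of Some v \<Rightarrow> if rcv t i then kspan (insert v (K t i)) else K t i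
                   | None \<Rightarrow> K t i)) \<and>
     (\<forall>t. m (Suc t) = Max ((\<lambda>i. rank (K (Suc t) i)) ` {1, 2, 3})) \<and>
     (\<forall>t. labels_ok (K (Suc t)) (m (Suc t)) (lab (Suc t)))"

end

theory Submission
  imports Defs
begin


interpretation cv: vector_space "cscale :: 'f::field \<Rightarrow> 'f cvec \<Rightarrow> 'f cvec"
  by unfold_locales (auto simp: cscale_def fun_eq_iff algebra_simps)

definition Sub :: "nat set \<Rightarrow> 'f::field cvec set" where
  "Sub A = {v. \<forall>j. v j \<noteq> 0 \<longrightarrow> j \<in> A}"
definition unsolved :: "'f::field cvec set \<Rightarrow> nat set" where
  "unsolved V = heard V - decoded V"
definition subsing :: "nat set \<Rightarrow> bool" where
  "subsing X \<longleftrightarrow> (\<forall>a\<in>X. \<forall>b\<in>X. a = b)"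

lemma cscale_apply[simp]: "cscale c v j = c * v j"
  by (simp add: cscale_def)
lemma pkt_apply: "pkt i j = (if j = i then 1 else 0)"
  by (simp add: pkt_def)

lemma sum_apply_cvec: "(\<Sum>i\<in>A. (f i :: 'f::field cvec)) j = (\<Sum>i\<in>A. f i j)"
  by (induction A rule: infinite_finite_induct) auto

lemma expand_Sub:
  assumes "finite A" "v \<in> Sub A"
  shows "v = (\<Sum>j\<in>A. cscale (v j) (pkt j))"
proof
  fix i
  have "(\<Sum>j\<in>A. cscale (v j) (pkt j)) i = (\<Sum>j\<in>A. (if i = j then v j else 0))"
    by (auto simp: sum_apply_cvec pkt_apply intro!: sum.cong)
  also have "\<dots> = (if i \<in> A then v i else 0)"
    using assms(1) by (simp add: sum.delta)
  also have "\<dots> = v i" using assms(2) by (auto simp: Sub_def)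
  finally show "v i = (\<Sum>j\<in>A. cscale (v j) (pkt j)) i" by simp
qed

lemma Sub_span: "finite A \<Longrightarrow> Sub A \<subseteq> cv.span (pkt ` A)"
proof
  fix v :: "'f::field cvec" assume "finite A" "v \<in> Sub A"
  then have "v = (\<Sum>j\<in>A. cscale (v j) (pkt j))" by (rule expand_Sub)
  also have "\<dots> \<in> cv.span (pkt ` A)"
    by (intro cv.span_sum cv.span_scale cv.span_base) auto
  finally show "v \<in> cv.span (pkt ` A)" .
qed

lemma Sub_subspace: "cv.subspace (Sub A :: 'f::field cvec set)"
  apply (auto simp: cv.subspace_def Sub_def)
  by (metis add.left_neutral)

lemma pkt_Sub: "j \<in> A \<Longrightarrow> pkt j \<in> Sub A"
  by (auto simp: Sub_def pkt_apply)

lemma span_Sub: "S \<subseteq> Sub A \<Longrightarrow> cv.span S \<subseteq> Sub A"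
  by (rule cv.span_minimal[OF _ Sub_subspace])

lemma pkt_inj: "inj (pkt :: nat \<Rightarrow> 'f::field cvec)"
  by (auto simp: inj_def pkt_def fun_eq_iff)

lemma pkt_eq_iff[simp]: "(pkt i :: 'f::field cvec) = pkt j \<longleftrightarrow> i = j"
  using pkt_inj by (auto dest: injD)

lemma pkt_indep: "cv.independent (pkt ` A :: 'f::field cvec set)"
  unfolding cv.dependent_def
proof
  assume "\<exists>a\<in>(pkt ` A :: 'f cvec set). a \<in> cv.span (pkt ` A - {a})"
  then obtain a :: "'f cvec" where a: "a \<in> pkt ` A" "a \<in> cv.span (pkt ` A - {a})" by blast
  then obtain j where "j \<in> A" "a = pkt j" by blast
  with a have j: "j \<in> A" "pkt j \<in> cv.span (pkt ` A - {pkt j} :: 'f cvec set)" by simp_all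
  have "pkt ` A - {pkt j} \<subseteq> (Sub (A - {j}) :: 'f cvec set)"
  proof
    fix y :: "'f cvec" assume "y \<in> pkt ` A - {pkt j}"
    then obtain k where "k \<in> A" "y = pkt k" "k \<noteq> j" by blast
    then show "y \<in> (Sub (A - {j}) :: 'f cvec set)" using pkt_Sub[of k "A - {j}"] by simp
  qed
  then have "cv.span (pkt ` A - {pkt j}) \<subseteq> (Sub (A - {j}) :: 'f cvec set)"
    by (rule span_Sub)
  with j have "(pkt j :: 'f cvec) \<in> Sub (A - {j})" by blast
  then have "(pkt j j :: 'f) \<noteq> 0 \<longrightarrow> j \<in> A - {j}" unfolding Sub_def by blast
  then show False by (simp add: pkt_apply)
qed

lemma card_pkt: "card (pkt ` A :: 'f::field cvec set) = card A"
  by (rule card_image[OF inj_on_subset[OF pkt_inj subset_UNIV]])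

lemma dim_ge_indep:
  assumes "B \<subseteq> V" "cv.independent B" "V \<subseteq> cv.span W" "finite W"
  shows "card B \<le> cv.dim (V :: 'f::field cvec set)"
proof -
  obtain A where A: "A \<subseteq> V" "cv.independent A" "V \<subseteq> cv.span A" "card A = cv.dim V"
    by (rule cv.basis_exists)
  have "finite A" using cv.independent_span_bound[OF assms(4) A(2)] A(1) assms(3) by auto
  then have "card B \<le> card A" using cv.independent_span_bound[OF _ assms(2)] assms(1) A(3) by auto
  then show ?thesis using A(4) by simp
qed

lemma dim_mono':
  assumes "V \<subseteq> V'" "V' \<subseteq> cv.span W" "finite W"
  shows "cv.dim (V :: 'f::field cvec set) \<le> cv.dim V'"
proof -
  obtain A where A: "A \<subseteq> V" "cv.independent A" "V \<subseteq> cv.span A" "card A = cv.dim V"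
    by (rule cv.basis_exists)
  have "card A \<le> cv.dim V'" using dim_ge_indep[of A V' W] A assms by auto
  then show ?thesis using A by simp
qed

lemma dim_insert_le:
  assumes "V \<subseteq> cv.span W" "finite W"
  shows "cv.dim (cv.span (insert v V) :: 'f::field cvec set) \<le> cv.dim V + 1"
proof -
  obtain A where A: "A \<subseteq> V" "cv.independent A" "V \<subseteq> cv.span A" "card A = cv.dim V"
    by (rule cv.basis_exists)
  have fA: "finite A" using cv.independent_span_bound[OF assms(2) A(2)] A(1) assms(1) by auto
  have "cv.span (insert v V) \<subseteq> cv.span (insert v A)"
  proof (rule cv.span_minimal[OF _ cv.subspace_span])
    have "V \<subseteq> cv.span (insert v A)" using A(3) cv.span_mono[of A "insert v A"] by blast
    then show "insert v V \<subseteq> cv.span (insert v A)" using cv.span_base[of v "insert v A"] by blast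
  qed
  then have "cv.dim (cv.span (insert v V)) \<le> card (insert v A)"
    using fA by (intro cv.dim_le_card) auto
  also have "\<dots> \<le> card A + 1" by (simp add: card_insert_if fA)
  finally show ?thesis using A(4) by simp
qed

lemma dim_Sub_le:
  assumes "V \<subseteq> Sub {1..n}"
  shows "cv.dim (V :: 'f::field cvec set) \<le> n"
proof -
  have "V \<subseteq> cv.span (pkt ` {1..n})" using assms Sub_span[of "{1..n}"] by auto
  then have "cv.dim V \<le> card (pkt ` {1..n} :: 'f cvec set)" by (intro cv.dim_le_card) auto
  then show ?thesis by (simp add: card_pkt)
qed

lemma decoded_dim:
  assumes "{1..n} \<subseteq> decoded V" "V \<subseteq> Sub {1..M}"
  shows "n \<le> cv.dim (V :: 'f::field cvec set)"
proof -
  have "pkt ` {1..n} \<subseteq> V" using assms(1) by (auto simp: decoded_def)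
  moreover have "V \<subseteq> cv.span (pkt ` {1..M})" using assms(2) Sub_span[of "{1..M}"] by auto
  ultimately have "card (pkt ` {1..n} :: 'f cvec set) \<le> cv.dim V"
    by (intro dim_ge_indep[OF _ pkt_indep]) auto
  then show ?thesis by (simp add: card_pkt)
qed

lemma full_decoded:
  assumes sub: "cv.subspace V" and VS: "V \<subseteq> Sub {1..n}" and d: "n \<le> cv.dim (V :: 'f::field cvec set)"
  shows "{1..n} \<subseteq> decoded V"
proof
  fix j assume j: "j \<in> {1..n}"
  show "j \<in> decoded V"
  proof (rule ccontr)
    assume nd: "j \<notin> decoded V"
    then have pj: "pkt j \<notin> V" using j by (auto simp: decoded_def)
    obtain A where A: "A \<subseteq> V" "cv.independent A" "V \<subseteq> cv.span A" "card A = cv.dim V"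
      by (rule cv.basis_exists)
    have spA: "cv.span A = V" using A sub cv.span_subspace by blast
    have ind: "cv.independent (insert (pkt j) A)"
      using cv.independent_insertI[OF _ A(2)] pj spA by auto
    have "insert (pkt j) A \<subseteq> cv.span (pkt ` {1..n})"
      using A(1) VS Sub_span[of "{1..n}"] j pkt_Sub[of j "{1..n}"] by auto
    from cv.independent_span_bound[OF _ ind this]
    have "finite (insert (pkt j) A) \<and> card (insert (pkt j) A) \<le> card (pkt ` {1..n} :: 'f cvec set)" by simp
    moreover have "pkt j \<notin> A" using A(1) pj by auto
    ultimately show False using A(4) d by (auto simp: card_pkt)
  qed
qed

lemma unsolved_single:
  assumes sub: "cv.subspace V" and VS: "V \<subseteq> Sub A" and fin: "finite A" and A0: "0 \<notin> A"
    and u: "unsolved (V :: 'f::field cvec set) \<subseteq> {s}"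
  shows "unsolved V = {}"
proof (rule ccontr)
  assume "unsolved V \<noteq> {}"
  then have s: "s \<in> heard V" "s \<notin> decoded V" using u unfolding unsolved_def by auto
  then obtain w where w: "w \<in> V" "w s \<noteq> 0" and s0: "0 < s" by (auto simp: heard_def)
  have sA: "s \<in> A" using w VS by (auto simp: Sub_def)
  define r where "r = (\<Sum>j\<in>A-{s}. cscale (w j) (pkt j))"
  have "r \<in> V" unfolding r_def
  proof (rule cv.subspace_sum[OF sub])
    fix j assume j: "j \<in> A - {s}"
    show "cscale (w j) (pkt j) \<in> V"
    proof (cases "w j = 0")
      case True
      then have "cscale (w j) (pkt j) = 0" by (simp add: cscale_def fun_eq_iff)
      then show ?thesis using cv.subspace_0[OF sub] by metis
    next
      case False
      then have "j \<in> heard V" using w(1) j A0 by (auto simp: heard_def intro!: gr0I)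
      then have "j \<in> decoded V" using u j unfolding unsolved_def by auto
      then have "pkt j \<in> V" by (simp add: decoded_def)
      then show ?thesis by (rule cv.subspace_scale[OF sub])
    qed
  qed
  then have "w - r \<in> V" using w(1) by (rule cv.subspace_diff[OF sub, rotated])
  moreover have "w - r = cscale (w s) (pkt s)"
  proof
    fix i
    have wA: "w i \<noteq> 0 \<Longrightarrow> i \<in> A" using w(1) VS by (auto simp: Sub_def)
    have "r i = (\<Sum>j\<in>A-{s}. (if i = j then w j else 0))"
      unfolding r_def by (auto simp: sum_apply_cvec pkt_apply intro!: sum.cong split: if_splits)
    also have "\<dots> = (if i \<in> A - {s} then w i else 0)"
      using fin by (simp add: sum.delta)
    finally have ri: "r i = (if i \<in> A - {s} then w i else 0)" .
    show "(w - r) i = cscale (w s) (pkt s) i"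
    proof (cases "i = s")
      case True then show ?thesis using ri by (simp add: pkt_apply)
    next
      case False then show ?thesis using ri wA by (cases "i \<in> A") (auto simp: pkt_apply)
    qed
  qed
  ultimately have "cscale (w s) (pkt s) \<in> V" by simp
  then have "cscale (inverse (w s)) (cscale (w s) (pkt s)) \<in> V"
    by (rule cv.subspace_scale[OF sub])
  then have "pkt s \<in> V" using w(2) by simp
  then show False using s s0 by (simp add: decoded_def)
qed


definition supp :: "'f::field cvec \<Rightarrow> nat set" where
  "supp v = {j. v j \<noteq> 0}"

lemma supp_pkt[simp]: "supp (pkt x :: 'f::field cvec) = {x}"
  by (auto simp: supp_def pkt_apply)

lemma supp_pkt2: "x \<noteq> y \<Longrightarrow> supp (pkt x + pkt y :: 'f::field cvec) = {x, y}"
  by (auto simp: supp_def pkt_apply)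

lemma supp_pktc: "x \<noteq> y \<Longrightarrow> c \<noteq> 0 \<Longrightarrow> supp (pkt x + cscale c (pkt y) :: 'f::field cvec) = {x, y}"
  by (auto simp: supp_def pkt_apply)

lemma supp_add_pkt: "q \<notin> supp w \<Longrightarrow> supp (pkt q + w :: 'f::field cvec) = insert q (supp w)"
  by (auto simp: supp_def pkt_apply)

lemma oldest_in: "S \<noteq> {} \<Longrightarrow> oldest S \<in> S"
  unfolding oldest_def by (metis LeastI ex_in_conv)

lemma fne3_Some: "first_nonempty [A, B, C] = Some p \<Longrightarrow>
   (A \<noteq> {} \<and> p = oldest A) \<or> (A = {} \<and> B \<noteq> {} \<and> p = oldest B) \<or> (A = {} \<and> B = {} \<and> C \<noteq> {} \<and> p = oldest C)"
  by (auto simp: first_nonempty_def split: if_splits)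

lemma fne3_mem: "first_nonempty [A, B, C] = Some p \<Longrightarrow>
   p \<in> A \<or> (A = {} \<and> p \<in> B) \<or> (A = {} \<and> B = {} \<and> p \<in> C)"
  using fne3_Some[of A B C p] oldest_in[of A] oldest_in[of B] oldest_in[of C] by blast

lemma fne3_None: "first_nonempty [A, B, C] = None \<Longrightarrow> A = {} \<and> B = {} \<and> C = {}"
  by (auto simp: first_nonempty_def split: if_splits list.splits)

lemma fne5_Some: "first_nonempty [A, B, C, E, F] = Some p \<Longrightarrow>
   (A \<noteq> {} \<and> p = oldest A) \<or> (A = {} \<and> B \<noteq> {} \<and> p = oldest B) \<or> (A = {} \<and> B = {} \<and> C \<noteq> {} \<and> p = oldest C)
   \<or> (A = {} \<and> B = {} \<and> C = {} \<and> E \<noteq> {} \<and> p = oldest E)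
   \<or> (A = {} \<and> B = {} \<and> C = {} \<and> E = {} \<and> F \<noteq> {} \<and> p = oldest F)"
  by (auto simp: first_nonempty_def split: if_splits)

lemma fne5_None: "first_nonempty [A, B, C, E, F] = None \<Longrightarrow> A = {} \<and> B = {} \<and> C = {} \<and> E = {} \<and> F = {}"
  by (auto simp: first_nonempty_def split: if_splits list.splits)

lemma case1_shape:
  assumes "case1_send K N D m a = Some (w :: 'f::field cvec)"
  shows "(\<exists>x y. supp w = {x, y} \<and> x \<in> S2 K N D \<and> y \<in> S4 K N D) \<or>
         (\<exists>x y. supp w = {x, y} \<and> x \<in> S3 K N D \<and> y \<in> S4 K N D) \<or>
         (\<exists>x. supp w = {x} \<and> x \<in> S5 K N D) \<or>
         (\<exists>x. supp w = {x} \<and> x \<in> S6 K N D m a \<and> S5 K N D = {}) \<or>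
         (\<exists>x. supp w = {x} \<and> x \<in> S2 K N D \<and> S4 K N D = {} \<and> S5 K N D = {} \<and> S6 K N D m a = {}) \<or>
         (\<exists>x. supp w = {x} \<and> x \<in> S3 K N D \<and> S2 K N D = {} \<and> S4 K N D = {} \<and> S5 K N D = {} \<and> S6 K N D m a = {}) \<or>
         (\<exists>x. supp w = {x} \<and> x \<in> S4 K N D \<and> S2 K N D = {} \<and> S3 K N D = {} \<and> S5 K N D = {} \<and> S6 K N D m a = {})"
proof -
  have d24: "x \<in> S2 K N D \<Longrightarrow> y \<in> S4 K N D \<Longrightarrow> x \<noteq> y" for x y by (auto simp: S2_def S4_def)
  have d34: "x \<in> S3 K N D \<Longrightarrow> y \<in> S4 K N D \<Longrightarrow> x \<noteq> y" for x y by (auto simp: S3_def S4_def)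
  show ?thesis
  proof (cases "S2 K N D \<noteq> {} \<and> S4 K N D \<noteq> {}")
    case True
    then have "w = pkt (oldest (S2 K N D)) + pkt (oldest (S4 K N D))" using assms by (simp add: case1_send_def)
    then show ?thesis using True oldest_in d24 supp_pkt2 by metis
  next
    case F1: False
    show ?thesis
    proof (cases "S3 K N D \<noteq> {} \<and> S4 K N D \<noteq> {}")
      case True
      then have "w = pkt (oldest (S3 K N D)) + pkt (oldest (S4 K N D))" using assms F1 by (simp add: case1_send_def)
      then show ?thesis using True oldest_in d34 supp_pkt2 by metis
    next
      case F2: False
      have "case1_send K N D m a = map_option pkt (first_nonempty [S5 K N D, S6 K N D m a, S2 K N D, S3 K N D, S4 K N D])"
        unfolding case1_send_def by (simp only: if_not_P[OF F1] if_not_P[OF F2])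
      then have "map_option pkt (first_nonempty [S5 K N D, S6 K N D m a, S2 K N D, S3 K N D, S4 K N D]) = Some w"
        using assms by simp
      then obtain p where p: "first_nonempty [S5 K N D, S6 K N D m a, S2 K N D, S3 K N D, S4 K N D] = Some p" "w = pkt p"
        by auto
      have sw: "supp w = {p}" using p(2) by simp
      from fne5_Some[OF p(1)] show ?thesis
      proof (elim disjE conjE)
        assume "S5 K N D \<noteq> {}" "p = oldest (S5 K N D)"
        then show ?thesis using sw oldest_in by blast
      next
        assume "S5 K N D = {}" "S6 K N D m a \<noteq> {}" "p = oldest (S6 K N D m a)"
        then show ?thesis using sw oldest_in by blast
      next
        assume "S5 K N D = {}" "S6 K N D m a = {}" "S2 K N D \<noteq> {}" "p = oldest (S2 K N D)"
        moreover have "S4 K N D = {}" using F1 \<open>S2 K N D \<noteq> {}\<close> by blast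
        ultimately show ?thesis using sw oldest_in by blast
      next
        assume "S5 K N D = {}" "S6 K N D m a = {}" "S2 K N D = {}" "S3 K N D \<noteq> {}" "p = oldest (S3 K N D)"
        moreover have "S4 K N D = {}" using F2 \<open>S3 K N D \<noteq> {}\<close> by blast
        ultimately show ?thesis using sw oldest_in by blast
      next
        assume "S5 K N D = {}" "S6 K N D m a = {}" "S2 K N D = {}" "S3 K N D = {}" "S4 K N D \<noteq> {}" "p = oldest (S4 K N D)"
        then show ?thesis using sw oldest_in by blast
      qed
    qed
  qed
qed

lemma case1_None:
  assumes "case1_send K N D m a = (None :: 'f::field cvec option)"
  shows "S2 K N D = {} \<and> S3 K N D = {} \<and> S4 K N D = {} \<and> S5 K N D = {} \<and> S6 K N D m a = {}"
  using assms fne5_None by (auto simp: case1_send_def split: if_splits)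

definition C3S5 :: "(nat \<Rightarrow> 'f::field cvec set) \<Rightarrow> nat \<Rightarrow> nat \<Rightarrow> nat \<Rightarrow> nat \<Rightarrow> bool" where
  "C3S5 K N D m a \<longleftrightarrow> m + 1 \<le> a \<and> m + 1 \<in> S2 K N D \<and> S4 K N D = {} \<and> S5 K N D \<noteq> {}"

definition C5S6 :: "(nat \<Rightarrow> 'f::field cvec set) \<Rightarrow> nat \<Rightarrow> nat \<Rightarrow> nat \<Rightarrow> nat set \<Rightarrow> bool" where
  "C5S6 K N D m X \<longleftrightarrow> (\<exists>p. X = {m + 1, p} \<and> m + 1 \<in> decoded (K D) \<and> m + 1 \<notin> decoded (K N) \<and>
      p \<notin> heard (K D) \<and> p \<notin> decoded (K N) \<and> p \<noteq> m + 1 \<and> decoded (K N) \<subseteq> decoded (K D))"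

definition goodS :: "(nat \<Rightarrow> 'f::field cvec set) \<Rightarrow> nat \<Rightarrow> nat \<Rightarrow> nat \<Rightarrow> nat \<Rightarrow> nat set \<Rightarrow> bool" where
  "goodS K N D m a X \<longleftrightarrow>
     X \<subseteq> setU m a \<and>
     (m + 1 \<le> a \<longrightarrow> m + 1 \<in> X) \<and>
     ((\<exists>j\<in>X. j \<notin> decoded (K N)) \<or> setU m a \<subseteq> decoded (K N)) \<and>
     ((\<exists>j\<in>X. j \<notin> heard (K D)) \<or> (\<exists>x\<in>X. x \<notin> decoded (K D) \<and> X - {x} \<subseteq> decoded (K D)) \<or>
        (decoded (K N) \<subseteq> decoded (K D) \<and> setU m a \<subseteq> heard (K D) \<union> decoded (K N)) \<or> C3S5 K N D m a) \<and>
     (subsing (X - decoded (K N)) \<or> C5S6 K N D m X) \<and>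
     (X - decoded (K N) - decoded (K D) \<subseteq> S5 K N D \<or>
        (S5 K N D = {} \<and> subsing (X - decoded (K N) - decoded (K D))) \<or> (\<exists>x. X = {x}) \<or> C5S6 K N D m X)"

lemma good_case1:
  assumes na: "\<not> m + 1 \<le> a"
    and hN: "decoded (K N) \<subseteq> setU m a" and hD: "heard (K D) \<subseteq> setU m a" and dh: "decoded (K D) \<subseteq> heard (K D)"
    and s: "case1_send K N D m a = Some (w :: 'f::field cvec)"
  shows "goodS K N D m a (supp w)"
  using case1_shape[OF s] na hN hD dh
  by (elim disjE exE conjE) (auto simp: goodS_def S1_def S2_def S3_def S4_def S5_def S6_def setU_def subsing_def C3S5_def C5S6_def)

lemma good_case2:
  assumes ar: "m + 1 \<le> a" and q1: "m + 1 \<in> S1 K N D"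
    and hN: "decoded (K N) \<subseteq> setU m a" and hD: "heard (K D) \<subseteq> setU m a" and dh: "decoded (K D) \<subseteq> heard (K D)"
    and s: "send K N D m a c = Some (v :: 'f::field cvec)"
  shows "goodS K N D m a (supp v)"
proof -
  have sv: "Some v = Some (case case1_send K N D m a of None \<Rightarrow> pkt (m + 1) | Some w \<Rightarrow> pkt (m + 1) + w)"
    using s ar q1 by (simp add: send_def)
  show ?thesis
  proof (cases "case1_send K N D m a")
    case None
    then have "v = pkt (m + 1)" using sv by simp
    then show ?thesis using case1_None[OF None] ar q1 hN hD dh
      by (auto simp: goodS_def S1_def S2_def S3_def S4_def S5_def S6_def setU_def subsing_def C3S5_def C5S6_def)
  next
    case (Some w)
    then have v: "v = pkt (m + 1) + w" using sv by simp
    have "m + 1 \<notin> supp w"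
      using case1_shape[OF Some] q1 dh by (auto simp: S1_def S2_def S3_def S4_def S5_def S6_def)
    then have sv2: "supp v = insert (m + 1) (supp w)" using v supp_add_pkt by metis
    show ?thesis unfolding sv2
      using case1_shape[OF Some] ar q1 hN hD dh
      by (elim disjE exE conjE) (auto simp: goodS_def S1_def S2_def S3_def S4_def S5_def S6_def setU_def subsing_def C3S5_def C5S6_def)
  qed
qed

lemma good_case3:
  assumes ar: "m + 1 \<le> a" and q1: "m + 1 \<notin> S1 K N D" and q2: "m + 1 \<in> S2 K N D" and c0: "c \<noteq> 0"
    and hN: "decoded (K N) \<subseteq> setU m a" and hD: "heard (K D) \<subseteq> setU m a" and dh: "decoded (K D) \<subseteq> heard (K D)"
    and s: "send K N D m a c = Some (v :: 'f::field cvec)"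
  shows "goodS K N D m a (supp v)"
proof -
  have sv: "Some v = (case first_nonempty [S4 K N D, S5 K N D, S6 K N D m a] of
           None \<Rightarrow> Some (pkt (m + 1))
         | Some p \<Rightarrow> Some (pkt (m + 1) + cscale (if p \<in> S5 K N D then c else 1) (pkt p)))"
    using s ar q1 q2 by (simp add: send_def)
  show ?thesis
  proof (cases "first_nonempty [S4 K N D, S5 K N D, S6 K N D m a]")
    case None
    then have "v = pkt (m + 1)" using sv by simp
    then show ?thesis using fne3_None[OF None] ar q1 q2 hN hD dh
      by (auto simp: goodS_def S1_def S2_def S3_def S4_def S5_def S6_def setU_def subsing_def C3S5_def C5S6_def)
  next
    case (Some p)
    then have v: "v = pkt (m + 1) + cscale (if p \<in> S5 K N D then c else 1) (pkt p)" using sv by simp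
    have pq: "p \<noteq> m + 1" using fne3_mem[OF Some] q2
      by (auto simp: S2_def S4_def S5_def S6_def)
    have sv2: "supp v = {m + 1, p}" unfolding v by (rule supp_pktc[OF pq[symmetric]]) (simp add: c0)
    show ?thesis unfolding sv2
      using fne3_mem[OF Some] ar q1 q2 hN hD dh
      by (elim disjE conjE) (auto simp: goodS_def S1_def S2_def S3_def S4_def S5_def S6_def setU_def subsing_def C3S5_def C5S6_def)
  qed
qed

lemma S23_empty: "S2 K N D = {} \<Longrightarrow> S3 K N D = {} \<Longrightarrow> decoded (K N) \<subseteq> decoded (K D)"
  by (auto simp: S2_def S3_def)


lemma good_case4:
  assumes ar: "m + 1 \<le> a" and q1: "m + 1 \<notin> S1 K N D" and q2: "m + 1 \<notin> S2 K N D" and q3: "m + 1 \<in> S3 K N D"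
    and hN: "decoded (K N) \<subseteq> setU m a" and hD: "heard (K D) \<subseteq> setU m a" and dh: "decoded (K D) \<subseteq> heard (K D)"
    and s: "send K N D m a c = Some (v :: 'f::field cvec)"
  shows "goodS K N D m a (supp v)"
proof -
  have sv: "Some v = (case first_nonempty [S4 K N D, S5 K N D, S6 K N D m a] of
           None \<Rightarrow> Some (pkt (m + 1))
         | Some p \<Rightarrow> Some (pkt (m + 1) + pkt p))"
    using s ar q1 q2 q3 by (simp add: send_def)
  show ?thesis
  proof (cases "first_nonempty [S4 K N D, S5 K N D, S6 K N D m a]")
    case None
    then have "v = pkt (m + 1)" using sv by simp
    then show ?thesis using fne3_None[OF None] ar q1 q2 q3 hN hD dh
      by (auto simp: goodS_def S1_def S2_def S3_def S4_def S5_def S6_def setU_def subsing_def C3S5_def C5S6_def)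
  next
    case (Some p)
    then have v: "v = pkt (m + 1) + pkt p" using sv by simp
    have pq: "p \<noteq> m + 1" using fne3_mem[OF Some] q3
      by (auto simp: S3_def S4_def S5_def S6_def)
    have sv2: "supp v = {m + 1, p}" unfolding v by (rule supp_pkt2[OF pq[symmetric]])
    show ?thesis unfolding sv2
      using fne3_mem[OF Some] ar q1 q2 q3 hN hD dh
      by (elim disjE conjE) (auto simp: goodS_def S1_def S2_def S3_def S4_def S5_def S6_def setU_def subsing_def C3S5_def C5S6_def)
  qed
qed

lemma good_case5:
  assumes ar: "m + 1 \<le> a" and q1: "m + 1 \<notin> S1 K N D" and q2: "m + 1 \<notin> S2 K N D" and q3: "m + 1 \<notin> S3 K N D"
    and q4: "m + 1 \<in> S4 K N D"
    and hN: "decoded (K N) \<subseteq> setU m a" and hD: "heard (K D) \<subseteq> setU m a" and dh: "decoded (K D) \<subseteq> heard (K D)"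
    and s: "send K N D m a c = Some (v :: 'f::field cvec)"
  shows "goodS K N D m a (supp v)"
proof -
  have sv: "Some v = (case first_nonempty [S2 K N D, S3 K N D, S6 K N D m a] of
           None \<Rightarrow> Some (pkt (m + 1))
         | Some p \<Rightarrow> Some (pkt (m + 1) + pkt p))"
    using s ar q1 q2 q3 q4 by (simp add: send_def)
  show ?thesis
  proof (cases "first_nonempty [S2 K N D, S3 K N D, S6 K N D m a]")
    case None
    then have "v = pkt (m + 1)" using sv by simp
    moreover have "decoded (K N) \<subseteq> decoded (K D)" using S23_empty fne3_None[OF None] by blast
    ultimately show ?thesis using fne3_None[OF None] ar q1 q2 q3 q4 hN hD dh
      by (auto simp: goodS_def S1_def S2_def S3_def S4_def S5_def S6_def setU_def subsing_def C3S5_def C5S6_def)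
  next
    case (Some p)
    then have v: "v = pkt (m + 1) + pkt p" using sv by simp
    have pq: "p \<noteq> m + 1" using fne3_mem[OF Some] q4 dh
      by (auto simp: S2_def S3_def S4_def S6_def)
    have sv2: "supp v = {m + 1, p}" unfolding v by (rule supp_pkt2[OF pq[symmetric]])
    show ?thesis unfolding sv2
      using fne3_mem[OF Some] ar q1 q2 q3 q4 hN hD dh S23_empty[of K N D]
      by (elim disjE conjE) (auto simp: goodS_def S1_def S2_def S3_def S4_def S5_def S6_def setU_def subsing_def C3S5_def C5S6_def)
  qed
qed

lemma good_case6:
  assumes ar: "m + 1 \<le> a" and q1: "m + 1 \<notin> S1 K N D" and q2: "m + 1 \<notin> S2 K N D" and q3: "m + 1 \<notin> S3 K N D"
    and q4: "m + 1 \<notin> S4 K N D"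
    and hN: "decoded (K N) \<subseteq> setU m a" and hD: "heard (K D) \<subseteq> setU m a" and dh: "decoded (K D) \<subseteq> heard (K D)"
    and s: "send K N D m a c = Some (v :: 'f::field cvec)"
  shows "goodS K N D m a (supp v)"
proof -
  have "v = pkt (m + 1)"
    using s ar q1 q2 q3 q4 by (simp add: send_def)
  moreover have qN: "m + 1 \<notin> decoded (K N)" using q1 q2 q3 by (auto simp: S1_def S2_def S3_def)
  moreover have qD: "m + 1 \<notin> decoded (K D)" using q1 q4 by (auto simp: S1_def S4_def)
  moreover have "m + 1 \<in> setU m a" using ar by (simp add: setU_def)
  ultimately show ?thesis unfolding goodS_def subsing_def by auto
qed

lemma send_good:
  assumes c0: "c \<noteq> 0"
    and hN: "decoded (K N) \<subseteq> setU m a" and hD: "heard (K D) \<subseteq> setU m a" and dh: "decoded (K D) \<subseteq> heard (K D)"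
    and s: "send K N D m a c = Some (v :: 'f::field cvec)"
  shows "goodS K N D m a (supp v)"
proof (cases "m + 1 \<le> a")
  case False
  then have "case1_send K N D m a = Some v" using s by (simp add: send_def)
  then show ?thesis using good_case1 False hN hD dh by blast
next
  case ar: True
  show ?thesis
    using good_case2[OF ar _ hN hD dh s] good_case3[OF ar _ _ c0 hN hD dh s]
      good_case4[OF ar _ _ _ hN hD dh s] good_case5[OF ar _ _ _ _ hN hD dh s]
      good_case6[OF ar _ _ _ _ hN hD dh s] by blast
qed

lemma send_None:
  assumes "send K N D m a c = (None :: 'f::field cvec option)"
  shows "\<not> m + 1 \<le> a \<and> S2 K N D = {} \<and> S3 K N D = {} \<and> S4 K N D = {} \<and> S5 K N D = {} \<and> S6 K N D m a = {}"
proof -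
  have "\<not> m + 1 \<le> a" using assms by (auto simp: send_def split: if_splits option.splits)
  then show ?thesis using assms case1_None by (simp add: send_def)
qed


lemma heard_Sub: "V \<subseteq> Sub A \<Longrightarrow> heard V \<subseteq> A"
  by (auto simp: heard_def Sub_def)

lemma decoded_heard: "decoded (V :: 'f::field cvec set) \<subseteq> heard V"
  by (auto simp: heard_def decoded_def pkt_apply intro!: bexI[where x="pkt _"])

lemma decoded_mono: "V \<subseteq> W \<Longrightarrow> decoded V \<subseteq> decoded W"
  by (auto simp: decoded_def)

lemma heard_mono: "V \<subseteq> W \<Longrightarrow> heard V \<subseteq> heard W"
  by (auto simp: heard_def)

lemma span_insert_sub:
  assumes "cv.subspace V" "w \<in> cv.span (insert v V)"
  shows "\<exists>k. w - cscale k v \<in> (V :: 'f::field cvec set)"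
proof -
  have "cv.span V = V" using assms(1) by simp
  moreover obtain k where "w - cscale k v \<in> cv.span V"
    using assms(2) cv.span_insert[of v V] by blast
  ultimately show ?thesis by (metis (no_types))
qed

lemma heard_span_insert:
  assumes "cv.subspace V"
  shows "heard (cv.span (insert v V)) \<subseteq> heard (V :: 'f::field cvec set) \<union> supp v"
proof
  fix j assume "j \<in> heard (cv.span (insert v V))"
  then obtain w where w: "w \<in> cv.span (insert v V)" "w j \<noteq> 0" and j: "0 < j" by (auto simp: heard_def)
  obtain k where k: "w - cscale k v \<in> V" using span_insert_sub[OF assms w(1)] by blast
  show "j \<in> heard V \<union> supp v"
  proof (cases "v j = 0")
    case True
    then have "(w - cscale k v) j \<noteq> 0" using w(2) by simp
    then show ?thesis using k j unfolding heard_def by blast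
  next
    case False then show ?thesis by (simp add: supp_def)
  qed
qed

lemma supp_Sub: "supp v \<subseteq> A \<Longrightarrow> v \<in> Sub A"
  by (auto simp: supp_def Sub_def)

lemma heard_notin: "j \<in> supp v \<Longrightarrow> 0 < j \<Longrightarrow> j \<notin> heard V \<Longrightarrow> v \<notin> V"
  by (auto simp: heard_def supp_def)

lemma isolate:
  assumes sub: "cv.subspace V" and v: "v \<in> V" and fin: "finite (supp v)" and s0: "0 \<notin> supp v"
    and x: "x \<in> supp v" and dec: "supp v - {x} \<subseteq> decoded V"
  shows "pkt x \<in> (V :: 'f::field cvec set)"
proof -
  define A where "A = supp v"
  have vA: "v \<in> Sub A" unfolding A_def by (rule supp_Sub) simp
  define r where "r = (\<Sum>j\<in>A-{x}. cscale (v j) (pkt j))"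
  have "r \<in> V" unfolding r_def
  proof (rule cv.subspace_sum[OF sub])
    fix j assume j: "j \<in> A - {x}"
    then have "pkt j \<in> V" using dec by (auto simp: A_def decoded_def)
    then show "cscale (v j) (pkt j) \<in> V" by (rule cv.subspace_scale[OF sub])
  qed
  then have "v - r \<in> V" using v by (rule cv.subspace_diff[OF sub, rotated])
  moreover have "v - r = cscale (v x) (pkt x)"
  proof
    fix i
    have vi: "v i \<noteq> 0 \<Longrightarrow> i \<in> A" by (simp add: A_def supp_def)
    have "r i = (\<Sum>j\<in>A-{x}. (if i = j then v j else 0))"
      unfolding r_def by (auto simp: sum_apply_cvec pkt_apply intro!: sum.cong split: if_splits)
    also have "\<dots> = (if i \<in> A - {x} then v i else 0)"
      using fin by (simp add: sum.delta A_def)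
    finally have ri: "r i = (if i \<in> A - {x} then v i else 0)" .
    show "(v - r) i = cscale (v x) (pkt x) i"
    proof (cases "i = x")
      case True then show ?thesis using ri by (simp add: pkt_apply)
    next
      case False then show ?thesis using ri vi by (cases "i \<in> A") (auto simp: pkt_apply)
    qed
  qed
  ultimately have "cscale (v x) (pkt x) \<in> V" by simp
  then have "cscale (inverse (v x)) (cscale (v x) (pkt x)) \<in> V"
    by (rule cv.subspace_scale[OF sub])
  moreover have "v x \<noteq> 0" using x by (simp add: supp_def)
  ultimately show ?thesis by simp
qed

lemma two_ne_zero_card3:
  assumes "card (UNIV :: 'f::field set) = 3"
  shows "(2::'f) \<noteq> 0"
proof
  assume two: "(2::'f) = 0"
  have fin: "finite (UNIV :: 'f set)" using assms card.infinite by fastforce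
  have "\<exists>b::'f. b \<noteq> 0 \<and> b \<noteq> 1"
  proof (rule ccontr)
    assume "\<not> ?thesis"
    then have "(UNIV :: 'f set) \<subseteq> {0, 1}" by auto
    then have "card (UNIV :: 'f set) \<le> card {0::'f, 1}" by (rule card_mono[rotated]) simp
    then show False using assms by (simp add: card_insert_if)
  qed
  then obtain b :: 'f where b: "b \<noteq> 0" "b \<noteq> 1" by blast
  have "(1::'f) + 1 = 0" using two by (simp add: one_add_one)
  then have m1: "(-1::'f) = 1" by (simp only: neg_eq_iff_add_eq_0)
  have "b + 1 \<noteq> 0"
  proof
    assume "b + 1 = 0"
    then have "b = - 1" by (simp only: eq_neg_iff_add_eq_0)
    then show False using b m1 by simp
  qed
  moreover have "b + 1 \<noteq> 1" using b by simp
  moreover have "b + 1 \<noteq> b" by simp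
  ultimately have "card {0::'f, 1, b, b + 1} = 4" using b by (simp add: card_insert_if)
  moreover have "card {0::'f, 1, b, b + 1} \<le> card (UNIV :: 'f set)" by (rule card_mono[OF fin]) simp
  ultimately show False using assms by simp
qed


definition Inv :: "(nat \<Rightarrow> 'f::field cvec set) \<Rightarrow> nat \<times> nat \<times> nat \<Rightarrow> nat \<Rightarrow> nat \<Rightarrow> bool" where
  "Inv K lab m a \<longleftrightarrow> (case lab of (L, N, D) \<Rightarrow>
     {L, N, D} = {1, 2, 3} \<and>
     (\<forall>i\<in>{1, 2, 3}. cv.subspace (K i) \<and> K i \<subseteq> Sub {1..m+1} \<and> K i \<subseteq> Sub {1..a}) \<and>
     m = Max ((\<lambda>i. rank (K i)) ` {1, 2, 3}) \<and>
     {1..m} \<subseteq> decoded (K L) \<and> unsolved (K N) = {} \<and> subsing (S5 K N D))"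

lemma perm3:
  assumes "{L, N, D} = {1, 2, 3::nat}"
  shows "L \<in> {1,2,3}" "N \<in> {1,2,3}" "D \<in> {1,2,3}" "L \<noteq> N" "L \<noteq> D" "N \<noteq> D"
    "\<And>i. i \<in> {1,2,3} \<Longrightarrow> i = L \<or> i = N \<or> i = D"
proof -
  have a: "1 \<in> {L, N, D}" "2 \<in> {L, N, D}" "3 \<in> {L, N, D}" by (simp_all only: assms) simp_all
  have "L \<in> {L, N, D}" "N \<in> {L, N, D}" "D \<in> {L, N, D}" by simp_all
  then have b: "L \<in> {1,2,3}" "N \<in> {1,2,3}" "D \<in> {1,2,3}" by (simp_all only: assms)
  show "L \<in> {1,2,3}" "N \<in> {1,2,3}" "D \<in> {1,2,3}" using b by simp_all
  have a': "(1 = L \<or> 1 = N \<or> 1 = D)" "(2 = L \<or> 2 = N \<or> 2 = D)" "(3 = L \<or> 3 = N \<or> 3 = D)"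
    using a by (simp_all only: insert_iff empty_iff simp_thms)
  have b': "(L = 1 \<or> L = 2 \<or> L = 3)" "(N = 1 \<or> N = 2 \<or> N = 3)" "(D = 1 \<or> D = 2 \<or> D = 3)"
    using b by (simp_all only: insert_iff empty_iff simp_thms)
  show "L \<noteq> N" "L \<noteq> D" "N \<noteq> D" using a' b' by linarith+
  show "\<And>i. i \<in> {1,2,3} \<Longrightarrow> i = L \<or> i = N \<or> i = D"
  proof -
    fix i assume "i \<in> {1, 2, 3::nat}"
    then have "i \<in> {L, N, D}" by (simp only: assms)
    then show "i = L \<or> i = N \<or> i = D" by (simp only: insert_iff empty_iff simp_thms)
  qed
qed

lemma rank_le_Max:
  assumes "i \<in> {1, 2, 3::nat}"
  shows "rank (K i) \<le> Max ((\<lambda>i. rank (K i)) ` {1, 2, 3})"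
  using assms by (intro Max_ge) auto

lemma inv_basic:
  assumes inv: "Inv K (L, N, D) m a"
  shows "{L, N, D} = {1, 2, 3}"
    and "\<And>i. i \<in> {1,2,3} \<Longrightarrow> cv.subspace (K i)"
    and "\<And>i. i \<in> {1,2,3} \<Longrightarrow> K i \<subseteq> Sub {1..m+1}"
    and "\<And>i. i \<in> {1,2,3} \<Longrightarrow> K i \<subseteq> Sub {1..a}"
    and "\<And>i. i \<in> {1,2,3} \<Longrightarrow> rank (K i) \<le> m"
    and "\<And>i. i \<in> {1,2,3} \<Longrightarrow> \<not> {1..m+1} \<subseteq> decoded (K i)"
    and "\<And>i. i \<in> {1,2,3} \<Longrightarrow> heard (K i) \<subseteq> setU m a"
    and "m \<le> a"
    and "{1..m} \<subseteq> decoded (K L)" and "unsolved (K N) = {}" and "subsing (S5 K N D)"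
    and "unsolved (K L) = {}"
    and "decoded (K N) \<subseteq> decoded (K D) \<Longrightarrow> unsolved (K D) = {}"
proof -
  note I = inv[unfolded Inv_def prod.case]
  show perm: "{L, N, D} = {1, 2, 3}" using I by blast
  note P = perm3[OF perm]
  show sub: "\<And>i. i \<in> {1,2,3} \<Longrightarrow> cv.subspace (K i)" using I by blast
  show S1: "\<And>i. i \<in> {1,2,3} \<Longrightarrow> K i \<subseteq> Sub {1..m+1}" using I by blast
  show S2: "\<And>i. i \<in> {1,2,3} \<Longrightarrow> K i \<subseteq> Sub {1..a}" using I by blast
  have mM: "m = Max ((\<lambda>i. rank (K i)) ` {1, 2, 3})" using I by blast
  show rk: "\<And>i. i \<in> {1,2,3} \<Longrightarrow> rank (K i) \<le> m"
  proof -
    fix i :: nat assume "i \<in> {1,2,3}"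
    from rank_le_Max[OF this, of K] show "rank (K i) \<le> m" by (simp only: mM[symmetric])
  qed
  show nd: "\<And>i. i \<in> {1,2,3} \<Longrightarrow> \<not> {1..m+1} \<subseteq> decoded (K i)"
  proof
    fix i :: nat assume i: "i \<in> {1,2,3}" and d: "{1..m+1} \<subseteq> decoded (K i)"
    have "m + 1 \<le> cv.dim (K i)" by (rule decoded_dim[OF d S1[OF i]])
    then show False using rk[OF i] unfolding rank_def by linarith
  qed
  have hd: "\<And>i. i \<in> {1,2,3} \<Longrightarrow> heard (K i) \<subseteq> {1..m+1} \<inter> {1..a}"
  proof -
    fix i :: nat assume i: "i \<in> {1,2,3}"
    show "heard (K i) \<subseteq> {1..m+1} \<inter> {1..a}"
      using heard_Sub[OF S1[OF i]] heard_Sub[OF S2[OF i]] by (rule Int_greatest)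
  qed
  show dL: "{1..m} \<subseteq> decoded (K L)" using I by blast
  show ma: "m \<le> a"
  proof (cases "m = 0")
    case False
    then have "m \<in> decoded (K L)" using dL by auto
    then have "m \<in> heard (K L)" using decoded_heard by blast
    then show ?thesis using hd[OF P(1)] by auto
  qed simp
  show "\<And>i. i \<in> {1,2,3} \<Longrightarrow> heard (K i) \<subseteq> setU m a"
    using hd ma by (fastforce simp: setU_def)
  show "unsolved (K N) = {}" "subsing (S5 K N D)" using I by blast+
  show "unsolved (K L) = {}"
  proof (rule unsolved_single[OF sub[OF P(1)] S1[OF P(1)]])
    show "unsolved (K L) \<subseteq> {m + 1}"
    proof
      fix x assume "x \<in> unsolved (K L)"
      then have x: "x \<in> heard (K L)" "x \<notin> decoded (K L)" by (auto simp: unsolved_def)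
      then have "x \<in> {1..m+1}" "x \<notin> {1..m}" using hd[OF P(1)] dL by blast+
      then show "x \<in> {m + 1}" by auto
    qed
  qed auto
  show "decoded (K N) \<subseteq> decoded (K D) \<Longrightarrow> unsolved (K D) = {}"
  proof -
    assume ND: "decoded (K N) \<subseteq> decoded (K D)"
    have ss: "subsing (S5 K N D)" using I by blast
    show "unsolved (K D) = {}"
    proof (cases "S5 K N D = {}")
      case True
      then have "unsolved (K D) \<subseteq> {0}" using ND by (auto simp: unsolved_def S5_def)
      then show ?thesis using unsolved_single[OF sub[OF P(3)] S1[OF P(3)]] by simp
    next
      case False
      then obtain s where "s \<in> S5 K N D" by blast
      then have "S5 K N D \<subseteq> {s}" using ss by (auto simp: subsing_def)
      then have "unsolved (K D) \<subseteq> {s}" using ND by (auto simp: unsolved_def S5_def)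
      then show ?thesis using unsolved_single[OF sub[OF P(3)] S1[OF P(3)]] by simp
    qed
  qed
qed


lemma setU_cases:
  "m + 1 \<le> a \<Longrightarrow> setU m a = {1..m+1}" "\<not> m + 1 \<le> a \<Longrightarrow> setU m a = {1..m}"
  by (auto simp: setU_def)

lemma setU_0: "0 \<notin> setU m a" "finite (setU m a)"
  by (auto simp: setU_def)

lemma c_nonzero:
  assumes "card (UNIV :: 'f::field set) = 3" "(c::'f) \<in> {1, 2}"
  shows "c \<noteq> 0"
  using assms two_ne_zero_card3[OF assms(1)] by auto

lemma C3S5_send:
  assumes "C3S5 K N D m a"
  shows "\<exists>p. p \<in> S5 K N D \<and> (\<forall>c. send K N D m a c = Some (pkt (m + 1) + cscale c (pkt p) :: 'f::field cvec))"
proof -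
  have ar: "m + 1 \<le> a" and q2: "m + 1 \<in> S2 K N D" and e4: "S4 K N D = {}" and n5: "S5 K N D \<noteq> {}"
    using assms by (auto simp: C3S5_def)
  have q1: "m + 1 \<notin> S1 K N D" using q2 by (auto simp: S1_def S2_def)
  have f: "first_nonempty [S4 K N D, S5 K N D, S6 K N D m a] = Some (oldest (S5 K N D))"
    using e4 n5 by (simp add: first_nonempty_def)
  have p: "oldest (S5 K N D) \<in> S5 K N D" by (rule oldest_in[OF n5])
  show ?thesis
    using ar q1 q2 f p by (intro exI[of _ "oldest (S5 K N D)"]) (simp add: send_def)
qed

lemma innov_main:
  assumes card3: "card (UNIV :: 'f::field set) = 3"
    and inv: "Inv (K :: nat \<Rightarrow> 'f cvec set) (L, N, D) m a"
    and c12: "c \<in> {1, 2}"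
    and choice: "(\<exists>c'\<in>{1, 2}. innovative (send K N D m a c') (K D)) \<longrightarrow> innovative (send K N D m a c) (K D)"
    and i: "i \<in> {1, 2, 3}" and tgt: "\<not> {1..a} \<subseteq> decoded (K i)"
  shows "innovative (send K N D m a c) (K i)"
proof -
  note B = inv_basic[OF inv]
  note P = perm3[OF B(1)]
  have c0: "c \<noteq> 0" by (rule c_nonzero[OF card3 c12])
  have hL: "heard (K L) \<subseteq> setU m a" and hN': "heard (K N) \<subseteq> setU m a" and hD: "heard (K D) \<subseteq> setU m a"
    using B(7) P(1-3) by blast+
  have hN: "decoded (K N) \<subseteq> setU m a" using hN' decoded_heard by blast
  have dh: "decoded (K D) \<subseteq> heard (K D)" by (rule decoded_heard)
  have tgtU: "\<not> setU m a \<subseteq> decoded (K i)"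
  proof
    assume U: "setU m a \<subseteq> decoded (K i)"
    show False
    proof (cases "m + 1 \<le> a")
      case True
      then show False using U B(6)[OF i] setU_cases(1) by metis
    next
      case False
      then have "{1..a} \<subseteq> setU m a" using setU_cases(2) by auto
      then show False using U tgt by blast
    qed
  qed
  have iLND: "i = L \<or> i = N \<or> i = D" using P(7)[OF i] .
  show ?thesis
  proof (cases "send K N D m a c")
    case None
    note E = send_None[OF None]
    have U: "setU m a = {1..m}" using E setU_cases(2) by blast
    have "setU m a \<subseteq> decoded (K L)" using U B(9) by simp
    moreover have "setU m a \<subseteq> decoded (K N)"
      using E hD by (auto simp: S1_def S2_def S3_def S4_def S5_def S6_def)
    moreover have "setU m a \<subseteq> decoded (K D)"
      using E dh unfolding S2_def S3_def S4_def S5_def S6_def by blast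
    ultimately show ?thesis using iLND tgtU by blast
  next
    case (Some v)
    have G: "goodS K N D m a (supp v)" by (rule send_good[OF c0 hN hD dh Some])
    have sU: "supp v \<subseteq> setU m a" using G by (simp add: goodS_def)
    then have s0: "0 \<notin> supp v" and sfin: "finite (supp v)" using setU_0 finite_subset by blast+
    have notin: "v \<notin> V" if "j \<in> supp v" "j \<notin> heard V" for j V
      using heard_notin[OF that(1) _ that(2)] that(1) s0 by (cases j) auto
    consider "i = L" | "i = N" | "i = D" using iLND by blast
    then show ?thesis
    proof cases
      case 1
      have ar: "m + 1 \<le> a"
      proof (rule ccontr)
        assume "\<not> m + 1 \<le> a"
        then show False using tgtU 1 B(9) setU_cases(2) by metis
      qed
      then have q: "m + 1 \<in> supp v" using G by (simp add: goodS_def)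
      have "m + 1 \<notin> decoded (K L)"
        using B(9) B(6)[OF P(1)] by (metis atLeastAtMost_iff le_Suc_eq Suc_eq_plus1 subsetI subsetD)
      then have "m + 1 \<notin> heard (K L)" using B(12) by (auto simp: unsolved_def)
      then have "v \<notin> K L" by (rule notin[OF q])
      then show ?thesis using Some 1 by (simp add: innovative_def)
    next
      case 2
      have "(\<exists>j\<in>supp v. j \<notin> decoded (K N)) \<or> setU m a \<subseteq> decoded (K N)" using G by (simp add: goodS_def)
      then obtain j where j: "j \<in> supp v" "j \<notin> decoded (K N)" using tgtU 2 by blast
      then have "j \<notin> heard (K N)" using B(10) by (auto simp: unsolved_def)
      then have "v \<notin> K N" by (rule notin[OF j(1)])
      then show ?thesis using Some 2 by (simp add: innovative_def)
    next
      case 3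
      have subD: "cv.subspace (K D)" using B(2) P(3) by blast
      have G4: "(\<exists>j\<in>supp v. j \<notin> heard (K D)) \<or> (\<exists>x\<in>supp v. x \<notin> decoded (K D) \<and> supp v - {x} \<subseteq> decoded (K D)) \<or>
        (decoded (K N) \<subseteq> decoded (K D) \<and> setU m a \<subseteq> heard (K D) \<union> decoded (K N)) \<or> C3S5 K N D m a"
        using G by (simp add: goodS_def)
      then show ?thesis
      proof (elim disjE)
        assume "\<exists>j\<in>supp v. j \<notin> heard (K D)"
        then have "v \<notin> K D" using notin by blast
        then show ?thesis using Some 3 by (simp add: innovative_def)
      next
        assume "\<exists>x\<in>supp v. x \<notin> decoded (K D) \<and> supp v - {x} \<subseteq> decoded (K D)"
        then obtain x where x: "x \<in> supp v" "x \<notin> decoded (K D)" "supp v - {x} \<subseteq> decoded (K D)" by blast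
        have "v \<notin> K D"
        proof
          assume "v \<in> K D"
          from isolate[OF subD this sfin s0 x(1) x(3)] have "pkt x \<in> K D" .
          moreover have "0 < x" using x(1) s0 by (cases x) auto
          ultimately show False using x(2) by (simp add: decoded_def)
        qed
        then show ?thesis using Some 3 by (simp add: innovative_def)
      next
        assume a: "decoded (K N) \<subseteq> decoded (K D) \<and> setU m a \<subseteq> heard (K D) \<union> decoded (K N)"
        then have "unsolved (K D) = {}" using B(13) by blast
        then have "setU m a \<subseteq> decoded (K D)" using a by (auto simp: unsolved_def)
        then show ?thesis using tgtU 3 by blast
      next
        assume C: "C3S5 K N D m a"
        obtain p where p: "p \<in> S5 K N D" and sp: "\<And>c. send K N D m a c = Some (pkt (m + 1) + cscale c (pkt p))"
          using C3S5_send[OF C] by blast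
        have "\<exists>c'\<in>{1, 2}. innovative (send K N D m a c') (K D)"
        proof (rule ccontr)
          assume "\<not> ?thesis"
          then have in1: "pkt (m + 1) + cscale 1 (pkt p) \<in> K D" and in2: "pkt (m + 1) + cscale 2 (pkt p) \<in> K D"
            using sp by (auto simp: innovative_def)
          have "(pkt (m + 1) + cscale 2 (pkt p)) - (pkt (m + 1) + cscale 1 (pkt p)) = (pkt p :: 'f cvec)"
            by (simp add: fun_eq_iff cscale_def algebra_simps)
          then have "pkt p \<in> K D" using cv.subspace_diff[OF subD in2 in1] by simp
          moreover have "0 < p" using p by (auto simp: S5_def heard_def)
          ultimately show False using p by (simp add: decoded_def S5_def)
        qed
        then show ?thesis using choice 3 by simp
      qed
    qed
  qed
qed


lemma Sub_mono: "A \<subseteq> B \<Longrightarrow> Sub A \<subseteq> Sub B"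
  unfolding Sub_def by blast

lemma subsing_mono: "X \<subseteq> Y \<Longrightarrow> subsing Y \<Longrightarrow> subsing X"
  by (auto simp: subsing_def)

lemma subsing_U1:
  assumes "cv.subspace V" "V \<subseteq> Sub A" "finite A" "0 \<notin> A" "subsing X" "unsolved (V :: 'f::field cvec set) \<subseteq> X"
  shows "unsolved V = {}"
proof (cases "X = {}")
  case True
  then show ?thesis using assms by auto
next
  case False
  then obtain s where "s \<in> X" by blast
  then have "X \<subseteq> {s}" using assms(5) by (auto simp: subsing_def)
  then show ?thesis using unsolved_single[OF assms(1-4)] assms(6) by blast
qed

lemma goodS_parts:
  assumes "goodS K N D m a X"
  shows "X \<subseteq> setU m a"
    and "(m + 1 \<le> a \<longrightarrow> m + 1 \<in> X)"
    and "subsing (X - decoded (K N)) \<or> C5S6 K N D m X"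
    and "X - decoded (K N) - decoded (K D) \<subseteq> S5 K N D \<or>
        (S5 K N D = {} \<and> subsing (X - decoded (K N) - decoded (K D))) \<or> (\<exists>x. X = {x}) \<or> C5S6 K N D m X"
  using assms by (simp_all add: goodS_def)

lemma U1_low:
  assumes "cv.subspace V" "V \<subseteq> Sub {1..n+1}" "{1..n} \<subseteq> decoded (V :: 'f::field cvec set)"
  shows "unsolved V = {}"
proof (rule unsolved_single[OF assms(1,2)])
  show "unsolved V \<subseteq> {n + 1}"
  proof
    fix y assume "y \<in> unsolved V"
    then have y: "y \<in> heard V" "y \<notin> decoded V" by (auto simp: unsolved_def)
    then have "y \<in> {1..n+1}" "y \<notin> {1..n}" using heard_Sub[OF assms(2)] assms(3) by blast+
    then show "y \<in> {n + 1}" by auto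
  qed
qed auto

lemma unsolved_low:
  assumes "heard V \<subseteq> {1..n+1}" "{1..n} \<subseteq> decoded (V :: 'f::field cvec set)"
  shows "unsolved V \<subseteq> {n + 1}"
proof
  fix y assume "y \<in> unsolved V"
  then have y: "y \<in> heard V" "y \<notin> decoded V" by (auto simp: unsolved_def)
  then have "y \<in> {1..n+1}" "y \<notin> {1..n}" using assms by blast+
  then show "y \<in> {n + 1}" by auto
qed

lemma recv_unsolved:
  assumes sub: "cv.subspace V"
  shows "unsolved (cv.span (insert v V)) \<subseteq> (heard V \<union> supp v) - decoded (V :: 'f::field cvec set)"
proof -
  have "decoded V \<subseteq> decoded (cv.span (insert v V))"
    by (rule decoded_mono) (meson cv.span_superset insert_subset subset_trans)
  then show ?thesis using heard_span_insert[OF sub, of v] by (auto simp: unsolved_def)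
qed

lemma inv_step:
  fixes K K' :: "nat \<Rightarrow> 'f::field cvec set"
  assumes card3: "card (UNIV :: 'f set) = 3"
    and inv: "Inv K (L, N, D) m a"
    and c12: "c \<in> {1, 2}"
    and xs: "x = send K N D m a c"
    and K': "\<And>i. K' i = (case x of Some v \<Rightarrow> if r i then cv.span (insert v (K i)) else K i | None \<Rightarrow> K i)"
    and m': "m' = Max ((\<lambda>i. rank (K' i)) ` {1, 2, 3})"
    and lab': "labels_ok K' m' lab'"
    and aa: "a \<le> a'"
  shows "Inv K' lab' m' a'"
proof -
  note B = inv_basic[OF inv]
  note P = perm3[OF B(1)]
  have c0: "c \<noteq> 0" by (rule c_nonzero[OF card3 c12])
  have hN': "heard (K N) \<subseteq> setU m a" and hD: "heard (K D) \<subseteq> setU m a"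
    using B(7) P(1-3) by blast+
  have hN: "decoded (K N) \<subseteq> setU m a" using hN' decoded_heard by blast
  have dh: "decoded (K D) \<subseteq> heard (K D)" by (rule decoded_heard)
  have Uma: "setU m a \<subseteq> {1..m+1}" "setU m a \<subseteq> {1..a}" using B(8) by (auto simp: setU_def)
  have vgood: "goodS K N D m a (supp v)" if "x = Some v" for v
    using send_good[OF c0 hN hD dh] that xs by simp
  have vS: "supp v \<subseteq> setU m a" if "x = Some v" for v
    using goodS_parts(1)[OF vgood[OF that]] .
  have vSub1: "v \<in> Sub {1..m+1}" and vSub2: "v \<in> Sub {1..a'}" if "x = Some v" for v
    using vS[OF that] Uma aa by (auto intro!: supp_Sub)
  have vfin: "finite (supp v)" and v0: "0 \<notin> supp v" if "x = Some v" for v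
    using vS[OF that] setU_0 finite_subset by blast+
  have Kcase: "(K' i = K i) \<or> (\<exists>v. x = Some v \<and> r i \<and> K' i = cv.span (insert v (K i)))" for i
    using K'[of i] by (cases x) auto
  have sub': "cv.subspace (K' i)" if i: "i \<in> {1,2,3}" for i
    using Kcase[of i] B(2)[OF i] by auto
  have KK': "K i \<subseteq> K' i" for i
    using Kcase[of i] cv.span_superset by blast
  have Sub1': "K' i \<subseteq> Sub {1..m+1}" if i: "i \<in> {1,2,3}" for i
    using Kcase[of i] B(3)[OF i] span_Sub vSub1 by (metis insert_subset)
  have Sub2': "K' i \<subseteq> Sub {1..a'}" if i: "i \<in> {1,2,3}" for i
  proof -
    have "{1..a} \<subseteq> {1..a'}" using aa by auto
    then have "K i \<subseteq> Sub {1..a'}" using B(4)[OF i] Sub_mono by blast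
    then show ?thesis using Kcase[of i] span_Sub vSub2 by (metis insert_subset)
  qed
  have dec': "decoded (K i) \<subseteq> decoded (K' i)" for i using KK' decoded_mono by blast
  have unsK': "unsolved (K' i) \<subseteq> unsolved (K i)" if "i \<in> {1,2,3}" "\<not> (\<exists>v. x = Some v \<and> r i)" for i
    using Kcase[of i] that by auto
  have unsK'v: "unsolved (K' i) \<subseteq> (heard (K i) \<union> supp v) - decoded (K i)" if "i \<in> {1,2,3}" "x = Some v" "r i" for i v
    using K'[of i] that recv_unsolved[OF B(2)[OF that(1)]] by simp
  have vin: "v \<in> K' i" if "x = Some v" "r i" for i v
    using K'[of i] that cv.span_base[of v "insert v (K i)"] by simp
  have W: "finite (pkt ` {1..m+1} :: 'f cvec set)" "Sub {1..m+1} \<subseteq> cv.span (pkt ` {1..m+1} :: 'f cvec set)"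
    using Sub_span[of "{1..m+1}"] by auto
  have rk_mono: "rank (K i) \<le> rank (K' i)" if i: "i \<in> {1,2,3}" for i
  proof -
    have "K' i \<subseteq> cv.span (pkt ` {1..m+1})" using Sub1'[OF i] W(2) by (rule subset_trans)
    then show ?thesis unfolding rank_def by (rule dim_mono'[OF KK'[of i] _ W(1)])
  qed
  have mm': "m \<le> m'"
  proof -
    have mM: "m = Max ((\<lambda>i. rank (K i)) ` {1, 2, 3})" using inv[unfolded Inv_def prod.case] by blast
    have "Max ((\<lambda>i. rank (K i)) ` {1, 2, 3}) \<in> (\<lambda>i. rank (K i)) ` {1, 2, (3::nat)}" by (rule Max_in) auto
    then have "m \<in> (\<lambda>i. rank (K i)) ` {1, 2, 3}" by (simp only: mM[symmetric])
    then obtain j where j: "j \<in> {1,2,3}" "m = rank (K j)" by blast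
    have "rank (K' j) \<le> m'" unfolding m' by (rule rank_le_Max[OF j(1)])
    then show ?thesis using rk_mono[OF j(1)] j(2) by simp
  qed
  have m'le: "m' \<le> m + 1"
    unfolding m' rank_def using dim_Sub_le[OF Sub1'] by (intro Max.boundedI) auto
  have Sub1'': "K' i \<subseteq> Sub {1..m'+1}" if i: "i \<in> {1,2,3}" for i
  proof -
    have "{1..m+1} \<subseteq> {1..m'+1}" using mm' by auto
    then show ?thesis using Sub1'[OF i] Sub_mono by blast
  qed
  obtain L' N' D' where labs: "lab' = (L', N', D')" by (cases lab') auto
  have perm': "{L', N', D'} = {1, 2, 3}"
    and Lmin: "{i \<in> {1, 2, 3}. {1..m'} \<subseteq> decoded (K' i)} \<noteq> {} \<longrightarrow> L' = Min {i \<in> {1, 2, 3}. {1..m'} \<subseteq> decoded (K' i)}"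
    and uns_lab: "(unsolved (K' N') \<noteq> {}) \<noteq> (unsolved (K' D') \<noteq> {}) \<longrightarrow> unsolved (K' D') \<noteq> {}"
    using lab' unfolding labels_ok_def labs by (auto simp: Let_def unsolved_def)
  note P' = perm3[OF perm']
  have Cne: "{i \<in> {1, 2, 3}. {1..m'} \<subseteq> decoded (K' i)} \<noteq> {}"
  proof (cases "m' = m")
    case True
    then have "L \<in> {i \<in> {1, 2, 3}. {1..m'} \<subseteq> decoded (K' i)}" using P(1) B(9) dec'[of L] by auto
    then show ?thesis by blast
  next
    case False
    then have mm: "m' = m + 1" using mm' m'le by simp
    have "m' \<in> (\<lambda>i. rank (K' i)) ` {1, 2, 3}" unfolding m' by (intro Max_in) auto
    then obtain j where j: "j \<in> {1,2,3}" "m' = rank (K' j)" by blast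
    have "{1..m+1} \<subseteq> decoded (K' j)"
      using full_decoded[OF sub'[OF j(1)] Sub1'[OF j(1)]] j(2) mm by (simp add: rank_def)
    then have "j \<in> {i \<in> {1, 2, 3}. {1..m'} \<subseteq> decoded (K' i)}" using j(1) mm by auto
    then show ?thesis by blast
  qed
  have L'C: "L' \<in> {i \<in> {1, 2, 3}. {1..m'} \<subseteq> decoded (K' i)}"
    using Lmin Cne Min_in[of "{i \<in> {1, 2, 3}. {1..m'} \<subseteq> decoded (K' i)}"] by auto
  then have decL': "{1..m'} \<subseteq> decoded (K' L')" by simp
  define Z where "Z \<longleftrightarrow> (\<exists>v. x = Some v \<and> C5S6 K N D m (supp v) \<and> r N)"
  have heardK'_1: "heard (K' i) \<subseteq> {1..m+1}" if "i \<in> {1,2,3}" for i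
    using heard_Sub[OF Sub1'[OF that]] .
  have UL: "unsolved (K' L) = {}"
    using U1_low[OF sub'[OF P(1)] Sub1'[OF P(1)]] B(9) dec'[of L] by blast
  have UN: "unsolved (K' N) = {}" if nZ: "\<not> Z"
  proof (cases "\<exists>v. x = Some v \<and> r N")
    case False
    then show ?thesis using unsK'[OF P(2) False] B(10) by blast
  next
    case True
    then obtain v where v: "x = Some v" "r N" by blast
    have "\<not> C5S6 K N D m (supp v)" using nZ v unfolding Z_def by blast
    then have ss: "subsing (supp v - decoded (K N))" using goodS_parts(3)[OF vgood[OF v(1)]] by blast
    have "heard (K N) \<subseteq> decoded (K N)" using B(10) by (auto simp: unsolved_def)
    then have "unsolved (K' N) \<subseteq> supp v - decoded (K N)" using unsK'v[OF P(2) v] by blast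
    then show ?thesis using subsing_U1[OF sub'[OF P(2)] Sub1'[OF P(2)] _ _ ss] by simp
  qed
  have UD: "unsolved (K' D) = {}" if C: "x = Some v" "C5S6 K N D m (supp v)" for v
  proof -
    obtain p where p: "supp v = {m + 1, p}" "m + 1 \<in> decoded (K D)" "decoded (K N) \<subseteq> decoded (K D)"
      using C(2) unfolding C5S6_def by blast
    have uD: "unsolved (K D) = {}" using B(13) p(3) by blast
    show ?thesis
    proof (cases "r D")
      case False
      then show ?thesis using unsK'[OF P(3)] uD by blast
    next
      case True
      have "heard (K D) \<subseteq> decoded (K D)" using uD by (auto simp: unsolved_def)
      then have "unsolved (K' D) \<subseteq> {p}" using unsK'v[OF P(3) C(1) True] p(1,2) by auto
      moreover have "subsing {p}" by (simp add: subsing_def)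
      ultimately show ?thesis using subsing_U1[OF sub'[OF P(3)] Sub1'[OF P(3)]] by simp
    qed
  qed
  have UDZ: "unsolved (K' D) = {}" if "Z" using that UD unfolding Z_def by blast
  have who: "i = D \<and> \<not> Z \<or> i = N \<and> Z" if i: "i \<in> {1,2,3}" and u: "unsolved (K' i) \<noteq> {}" for i
    using P(7)[OF i] u UL UN UDZ by blast
  have SD_L: "subsing (unsolved (K' D) - decoded (K' L))"
  proof -
    have "unsolved (K' D) \<subseteq> {1..m+1}" using heardK'_1[OF P(3)] by (auto simp: unsolved_def)
    moreover have "{1..m} \<subseteq> decoded (K' L)" using B(9) dec'[of L] by blast
    ultimately have "unsolved (K' D) - decoded (K' L) \<subseteq> {m + 1}"
    proof (intro subsetI)
      fix y assume "unsolved (K' D) \<subseteq> {1..m + 1}" "{1..m} \<subseteq> decoded (K' L)" "y \<in> unsolved (K' D) - decoded (K' L)"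
      then have "y \<in> {1..m+1}" "y \<notin> {1..m}" by blast+
      then show "y \<in> {m + 1}" by auto
    qed
    then show ?thesis by (rule subsing_mono) (simp add: subsing_def)
  qed
  have SD_N: "subsing (unsolved (K' D) - decoded (K' N))"
  proof (cases "\<exists>v. x = Some v \<and> r D")
    case False
    have "unsolved (K' D) - decoded (K' N) \<subseteq> S5 K N D"
      using unsK'[OF P(3) False] dec'[of N] by (auto simp: S5_def unsolved_def)
    then show ?thesis using B(11) by (rule subsing_mono)
  next
    case True
    then obtain v where v: "x = Some v" "r D" by blast
    have base: "unsolved (K' D) - decoded (K' N) \<subseteq> S5 K N D \<union> ((supp v - decoded (K N) - decoded (K D)) - decoded (K' D))"
    proof
      fix y assume y: "y \<in> unsolved (K' D) - decoded (K' N)"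
      then have y1: "y \<notin> decoded (K' D)" "y \<notin> decoded (K N)" using dec'[of N] by (auto simp: unsolved_def)
      have "y \<in> (heard (K D) \<union> supp v) - decoded (K D)" using y unsK'v[OF P(3) v] by blast
      then show "y \<in> S5 K N D \<union> ((supp v - decoded (K N) - decoded (K D)) - decoded (K' D))"
        using y1 unfolding S5_def by blast
    qed
    from goodS_parts(4)[OF vgood[OF v(1)]] show ?thesis
    proof (elim disjE)
      assume "supp v - decoded (K N) - decoded (K D) \<subseteq> S5 K N D"
      then have "unsolved (K' D) - decoded (K' N) \<subseteq> S5 K N D" using base by blast
      then show ?thesis using B(11) by (rule subsing_mono)
    next
      assume "S5 K N D = {} \<and> subsing (supp v - decoded (K N) - decoded (K D))"
      then have e: "S5 K N D = {}" and ss: "subsing (supp v - decoded (K N) - decoded (K D))" by blast+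
      have "unsolved (K' D) - decoded (K' N) \<subseteq> supp v - decoded (K N) - decoded (K D)" using base e by blast
      then show ?thesis using ss by (rule subsing_mono)
    next
      assume "\<exists>y. supp v = {y}"
      then obtain y where y: "supp v = {y}" by blast
      have "pkt y \<in> K' D"
        using isolate[OF sub'[OF P(3)] vin[OF v] vfin[OF v(1)] v0[OF v(1)]] y by simp
      moreover have "0 < y" using v0[OF v(1)] y by (cases y) auto
      ultimately have "y \<in> decoded (K' D)" by (simp add: decoded_def)
      then have "unsolved (K' D) - decoded (K' N) \<subseteq> S5 K N D" using base y by auto
      then show ?thesis using B(11) by (rule subsing_mono)
    next
      assume "C5S6 K N D m (supp v)"
      then have "unsolved (K' D) = {}" using UD[OF v(1)] by blast
      then show ?thesis by (simp add: subsing_def)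
    qed
  qed
  have SN: "subsing (unsolved (K' N) - decoded (K' L)) \<and> subsing (unsolved (K' N) - decoded (K' D))" if Zt: "Z"
  proof -
    obtain v where v: "x = Some v" "C5S6 K N D m (supp v)" "r N" using Zt unfolding Z_def by blast
    obtain p where p: "supp v = {m + 1, p}" "m + 1 \<in> decoded (K D)" "p \<noteq> m + 1"
      using v(2) unfolding C5S6_def by blast
    have "heard (K N) \<subseteq> decoded (K N)" using B(10) by (auto simp: unsolved_def)
    then have uN: "unsolved (K' N) \<subseteq> {m + 1, p}" using unsK'v[OF P(2) v(1,3)] p(1) by blast
    have "p \<in> setU m a" using vS[OF v(1)] p(1) by auto
    then have "p \<in> {1..m}" using p(3) Uma(1) by auto
    then have "p \<in> decoded (K' L)" using B(9) dec'[of L] by blast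
    then have 1: "unsolved (K' N) - decoded (K' L) \<subseteq> {m + 1}" using uN by auto
    have "m + 1 \<in> decoded (K' D)" using p(2) dec'[of D] by blast
    then have 2: "unsolved (K' N) - decoded (K' D) \<subseteq> {p}" using uN by auto
    show ?thesis using subsing_mono[OF 1] subsing_mono[OF 2] by (simp add: subsing_def)
  qed
  have UN': "unsolved (K' N') = {}"
  proof (rule ccontr)
    assume a1: "unsolved (K' N') \<noteq> {}"
    have "unsolved (K' D') = {}"
    proof (rule ccontr)
      assume "unsolved (K' D') \<noteq> {}"
      then have "N' = D'" using who[OF P'(2) a1] who[OF P'(3)] by blast
      then show False using P'(6) by simp
    qed
    then show False using uns_lab a1 by blast
  qed
  have S5': "subsing (S5 K' N' D')"
  proof (cases "unsolved (K' D') = {}")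
    case True
    then have "S5 K' N' D' = {}" unfolding S5_def unsolved_def by blast
    then show ?thesis by (simp add: subsing_def)
  next
    case False
    have eq: "S5 K' N' D' = unsolved (K' D') - decoded (K' N')" by (simp add: S5_def unsolved_def)
    have N'o: "N' = L \<or> N' = N \<or> N' = D" using P(7)[OF P'(2)] .
    from who[OF P'(3) False] show ?thesis
    proof (elim disjE conjE)
      assume "D' = D" "\<not> Z"
      then show ?thesis using N'o P'(6) SD_L SD_N eq by auto
    next
      assume "D' = N" "Z"
      then show ?thesis using N'o P'(6) SN eq by auto
    qed
  qed
  have all: "\<forall>i\<in>{1, 2, 3}. cv.subspace (K' i) \<and> K' i \<subseteq> Sub {1..m'+1} \<and> K' i \<subseteq> Sub {1..a'}"
    using sub' Sub1'' Sub2' by blast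
  show ?thesis
    unfolding Inv_def labs prod.case by (intro conjI perm' all m' decL' UN' S5')
qed


lemma inv_init:
  assumes "\<forall>i. K i = kspan ({} :: 'f::field cvec set)"
  shows "Inv K (1, 2, 3) 0 a"
proof -
  have K0: "K i = {0}" for i using assms by simp
  have r0: "rank (K i) = 0" for i
  proof -
    have a: "cv.dim ({} :: 'f cvec set) = 0" using cv.dim_eq_card_independent[OF cv.independent_empty] by simp
    have b: "cv.dim (cv.span {} :: 'f cvec set) = cv.dim ({} :: 'f cvec set)" by (rule cv.dim_span)
    have "cv.dim ({0} :: 'f cvec set) = 0" using trans[OF b a] by (simp only: cv.span_empty)
    then show ?thesis unfolding rank_def K0 .
  qed
  have h0: "heard (K i) = {}" for i by (simp add: K0 heard_def)
  have "unsolved (K i) = {}" for i by (simp add: unsolved_def h0)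
  moreover have "S5 K 2 3 = {}" by (simp add: S5_def h0)
  moreover have "cv.subspace (K i)" for i by (simp add: K0)
  moreover have "K i \<subseteq> Sub A" for i A by (simp add: K0 Sub_def)
  ultimately show ?thesis unfolding Inv_def by (simp add: r0 subsing_def)
qed

theorem theorem13:
  fixes arr :: "nat \<Rightarrow> nat" and rcv :: "nat \<Rightarrow> nat \<Rightarrow> bool"
    and K :: "nat \<Rightarrow> nat \<Rightarrow> 'f::field cvec set" and lab :: "nat \<Rightarrow> nat \<times> nat \<times> nat"
    and m :: "nat \<Rightarrow> nat" and x :: "nat \<Rightarrow> 'f cvec option"
    and t i :: nat
  assumes "card (UNIV :: 'f set) = 3"
    and "coding_run arr rcv K lab m x"
    and "i \<in> {1, 2, 3}"
    and "\<not> {1..arr t} \<subseteq> decoded (K t i)"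
  shows "innovative (x t) (K t i)"
proof -
  note run = assms(2)[unfolded coding_run_def]
  have mono: "mono arr" using run by blast
  have K0: "\<forall>i. K 0 i = kspan {}" using run by blast
  have l0: "lab 0 = (1, 2, 3)" and m0: "m 0 = 0" using run by blast+
  have choice_all: "\<forall>t. case lab t of (L, N, D) \<Rightarrow>
        (\<exists>c\<in>{1, 2}.
           ((\<exists>c'\<in>{1, 2}. innovative (send (K t) N D (m t) (arr t) c') (K t D))
              \<longrightarrow> innovative (send (K t) N D (m t) (arr t) c) (K t D)) \<and>
           x t = send (K t) N D (m t) (arr t) c)" using run by (elim conjE) assumption
  note choice = spec[OF choice_all]
  have Kstep_all: "\<forall>t i. K (Suc t) i =
        (case x t of Some v \<Rightarrow> if rcv t i then kspan (insert v (K t i)) else K t i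
                   | None \<Rightarrow> K t i)" using run by (elim conjE) assumption
  have Kstep: "\<And>t i. K (Suc t) i =
        (case x t of Some v \<Rightarrow> if rcv t i then kspan (insert v (K t i)) else K t i
                   | None \<Rightarrow> K t i)" using Kstep_all by blast
  have mstep: "\<And>t. m (Suc t) = Max ((\<lambda>i. rank (K (Suc t) i)) ` {1, 2, 3})" using run by blast
  have lstep: "\<And>t. labels_ok (K (Suc t)) (m (Suc t)) (lab (Suc t))" using run by blast
  have I: "Inv (K s) (lab s) (m s) (arr s)" for s
  proof (induction s)
    case 0
    then show ?case using inv_init[OF K0] l0 m0 by simp
  next
    case (Suc s)
    obtain L N D where l: "lab s = (L, N, D)" by (cases "lab s") auto
    obtain c where c: "c \<in> {1, 2}" "x s = send (K s) N D (m s) (arr s) c"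
      using choice[of s] l by auto
    have aa: "arr s \<le> arr (Suc s)" using mono by (simp add: mono_def)
    show ?case
      by (rule inv_step[OF assms(1) Suc[unfolded l] c(1) c(2) Kstep mstep lstep aa])
  qed
  obtain L N D where l: "lab t = (L, N, D)" by (cases "lab t") auto
  obtain c where c: "c \<in> {1, 2}" "x t = send (K t) N D (m t) (arr t) c"
    and ch: "(\<exists>c'\<in>{1, 2}. innovative (send (K t) N D (m t) (arr t) c') (K t D))
              \<longrightarrow> innovative (send (K t) N D (m t) (arr t) c) (K t D)"
    using choice[of t] l by auto
  show ?thesis
    unfolding c(2) by (rule innov_main[OF assms(1) I[of t, unfolded l] c(1) ch assms(3,4)])
qed


end
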